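(* Let $\mathfrak d$ be a delta operator with basic sequence $(p_n(x))_{n\ge0}$, let $a,b\in\mathbb K$, and let $\mathcal Z$ be the arithmetic grid $(a+bi)_{i\ge0}$. Then for every $n\ge1$, $$t_n(x;\mathfrak d,\mathcal Z)=\frac{(x-a)\,p_n(x-a-nb)}{x-a-nb},$$ where the right side is a polynomial since $p_n(y)$ is divisible by $y$.
   Context: $\mathbb K$ is a field of characteristic zero; a delta operator is a linear operator $\mathfrak d$ on $\mathbb K[x]$ commuting with all shifts $E_a:f(x)\mapsto f(x+a)$ and with $\mathfrak d(x)$ a nonzero constant; its basic sequence is the unique $(p_n)$ with $\deg p_n=n$, $p_0=1$, $p_n(0)=0$ ($n\ge1$), $\mathfrak dp_n=np_{n-1}$. $\varepsilon_z$ is evaluation at $z$. $t_n(x;\mathfrak d,\mathcal Z)$ is the $n$-th term of the generalized Gončarov basis associated with $(\mathfrak d,\mathcal Z)$, i.e. the unique sequence $(t_n)_{n\ge0}$ with $\deg t_n=n$ and $\varepsilon_{z_i}(\mathfrak d^{\,i}(t_n))=n!\,\delta_{i,n}$ for all $i,n$. *)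

theory Defs
  imports "HOL-Computational_Algebra.Polynomial"
begin

definition shift_poly :: "'a::comm_ring_1 \<Rightarrow> 'a poly \<Rightarrow> 'a poly" where
  "shift_poly a f = pcompose f [:a, 1:]"

definition delta_operator :: "('a::field poly \<Rightarrow> 'a poly) \<Rightarrow> bool" where
  "delta_operator d \<longleftrightarrow>
     (\<forall>f g. d (f + g) = d f + d g) \<and>
     (\<forall>c f. d (smult c f) = smult c (d f)) \<and>
     (\<forall>a f. d (shift_poly a f) = shift_poly a (d f)) \<and>
     (\<exists>c. c \<noteq> 0 \<and> d [:0, 1:] = [:c:])"

definition basic_sequence :: "('a::field poly \<Rightarrow> 'a poly) \<Rightarrow> (nat \<Rightarrow> 'a poly) \<Rightarrow> bool" where
  "basic_sequence d p \<longleftrightarrow>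
     (\<forall>n. degree (p n) = n) \<and> p 0 = 1 \<and>
     (\<forall>n\<ge>1. poly (p n) 0 = 0) \<and>
     (\<forall>n. d (p (Suc n)) = smult (of_nat (Suc n)) (p n))"

definition goncarov_basis :: "('a::field poly \<Rightarrow> 'a poly) \<Rightarrow> (nat \<Rightarrow> 'a) \<Rightarrow> (nat \<Rightarrow> 'a poly) \<Rightarrow> bool" where
  "goncarov_basis d z t \<longleftrightarrow>
     (\<forall>n. degree (t n) = n) \<and>
     (\<forall>i n. poly ((d ^^ i) (t n)) (z i) = (if i = n then of_nat (fact n) else 0))"

end

theory Submission
  imports Defs
begin

lemma smult_sum2: "smult c (sum f A) = (\<Sum>i\<in>A. smult c (f i))"
  by (induction A rule: infinite_finite_induct) (simp_all add: smult_add_right)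

lemma tri_swap:
  fixes G :: "nat \<Rightarrow> nat \<Rightarrow> 'b::comm_monoid_add"
  shows "(\<Sum>k\<le>n. \<Sum>j\<le>n-k. G k j) = (\<Sum>j\<le>n. \<Sum>k\<le>n-j. G k j)"
proof -
  have h: "(\<Sum>j\<le>n-k. G k j) = (\<Sum>j\<le>n. if k+j \<le> n then G k j else 0)" if "k \<le> n" for k
  proof -
    have "{j\<in>{..n}. k+j \<le> n} = {..n-k}" using that by auto
    then show ?thesis by (simp add: sum.inter_filter[symmetric])
  qed
  have h2: "(\<Sum>k\<le>n-j. G k j) = (\<Sum>k\<le>n. if k+j \<le> n then G k j else 0)" if "j \<le> n" for j
  proof -
    have "{k\<in>{..n}. k+j \<le> n} = {..n-j}" using that by auto
    then show ?thesis by (simp add: sum.inter_filter[symmetric])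
  qed
  have "(\<Sum>k\<le>n. \<Sum>j\<le>n-k. G k j) = (\<Sum>k\<le>n. \<Sum>j\<le>n. if k+j \<le> n then G k j else 0)"
    by (rule sum.cong[OF refl]) (simp add: h)
  also have "\<dots> = (\<Sum>j\<le>n. \<Sum>k\<le>n. if k+j \<le> n then G k j else 0)"
    by (rule sum.swap)
  also have "\<dots> = (\<Sum>j\<le>n. \<Sum>k\<le>n-j. G k j)"
    by (rule sum.cong[OF refl]) (simp add: h2)
  finally show ?thesis .
qed

lemma pderiv_sum': "pderiv (sum f A) = (\<Sum>i\<in>A. pderiv (f i))"
  by (induction A rule: infinite_finite_induct) (simp_all add: pderiv_add)

lemma multi_choose: "k + j \<le> n \<Longrightarrow> (n choose k) * (n - k choose j) = (n choose j) * (n - j choose k)"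
proof -
  assume a: "k + j \<le> n"
  have 1: "(n choose (k+j)) * ((k+j) choose k) = (n choose k) * ((n-k) choose j)"
    using choose_mult[of k "k+j" n] a by simp
  have 2: "(n choose (k+j)) * ((k+j) choose j) = (n choose j) * ((n-j) choose k)"
    using choose_mult[of j "k+j" n] a by simp
  have 3: "((k+j) choose k) = ((k+j) choose j)"
    using binomial_symmetric[of k "k+j"] by simp
  show ?thesis using 1 2 3 by simp
qed

lemma coeff1_shift: "coeff (pcompose f [:x,1:]) 1 = poly (pderiv f) x"
proof (induction f)
  case 0
  then show ?case by simp
next
  case (pCons a f)
  have c0: "coeff (pcompose f [:x,1:]) 0 = poly f x"
    by (simp add: poly_0_coeff_0[symmetric] poly_pcompose)
  show ?case using pCons c0
    by (simp add: pcompose_pCons pderiv_pCons coeff_pCons algebra_simps)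
qed

lemma pderiv_uniq:
  fixes f g :: "'a::field_char_0 poly"
  shows "pderiv f = pderiv g \<Longrightarrow> poly f 0 = poly g 0 \<Longrightarrow> f = g"
proof -
  assume a: "pderiv f = pderiv g" "poly f 0 = poly g 0"
  then have "pderiv (f - g) = 0" by (simp add: pderiv_diff)
  then obtain h where h: "f - g = [:h:]" using pderiv_iszero by blast
  then have "poly (f - g) 0 = h" by simp
  then have "h = 0" using a(2) by simp
  then show "f = g" using h by simp
qed

locale dsetup =
  fixes d :: "'a::field_char_0 poly \<Rightarrow> 'a poly" and p :: "nat \<Rightarrow> 'a poly"
  assumes del: "delta_operator d" and bas: "basic_sequence d p"
begin

lemma d_add: "d (f + g) = d f + d g" using del unfolding delta_operator_def by blast
lemma d_smult: "d (smult c f) = smult c (d f)" using del unfolding delta_operator_def by blast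
lemma d_shift: "d (shift_poly a f) = shift_poly a (d f)" using del unfolding delta_operator_def by blast
lemma d_x: "\<exists>c. c \<noteq> 0 \<and> d [:0, 1:] = [:c:]" using del unfolding delta_operator_def by blast

lemma p_deg: "degree (p n) = n" using bas unfolding basic_sequence_def by blast
lemma p_0: "p 0 = 1" using bas unfolding basic_sequence_def by blast
lemma p_at0: "n \<ge> 1 \<Longrightarrow> poly (p n) 0 = 0" using bas unfolding basic_sequence_def by blast
lemma p_d: "d (p (Suc n)) = smult (of_nat (Suc n)) (p n)" using bas unfolding basic_sequence_def by blast

lemma d_zero[simp]: "d 0 = 0"
  using d_smult[of 0 0] by simp

lemma d_uminus: "d (- f) = - d f"
  using d_smult[of "-1" f] by simp

lemma d_diff: "d (f - g) = d f - d g"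
  using d_add[of f "-g"] d_uminus[of g] by simp

lemma d_sum: "d (sum f A) = sum (\<lambda>i. d (f i)) A"
  by (induction A rule: infinite_finite_induct) (auto simp: d_add)

lemma d_one: "d 1 = 0"
proof -
  obtain c where c: "d [:0,1:] = [:c:]" using d_x by blast
  have "shift_poly 1 [:0,1:] = [:0,1:] + 1"
    by (simp add: shift_poly_def pcompose_pCons one_pCons)
  then have "d [:0,1:] + d 1 = shift_poly 1 (d [:0,1:])"
    using d_shift[of 1 "[:0,1:]"] d_add[of "[:0,1:]" 1] by metis
  also have "\<dots> = d [:0,1:]" using c by (simp add: shift_poly_def)
  finally show ?thesis by simp
qed

lemma d_const: "d [:c:] = 0"
  using d_smult[of c 1] d_one by simp

lemma d_deg0: "degree f = 0 \<Longrightarrow> d f = 0"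
  by (metis d_const degree_0_id)

lemma p_ne: "p n \<noteq> 0"
proof
  assume "p n = 0"
  then have "n = 0" using p_deg[of n] by simp
  with \<open>p n = 0\<close> p_0 show False by simp
qed

lemma d_deg: "degree f \<ge> 1 \<Longrightarrow> d f \<noteq> 0 \<and> degree (d f) = degree f - 1"
proof (induction "degree f" arbitrary: f rule: less_induct)
  case less
  define m where "m = degree f"
  have m1: "m \<ge> 1" using less m_def by simp
  have f0: "f \<noteq> 0" using m1 m_def by auto
  define c where "c = lead_coeff f / lead_coeff (p m)"
  have lp: "lead_coeff (p m) \<noteq> 0" using p_ne by simp
  have c0: "c \<noteq> 0" using f0 lp by (simp add: c_def)
  define g where "g = f - smult c (p m)"
  have cg: "coeff g m = 0" using lp by (simp add: g_def c_def p_deg m_def)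
  have dg_le: "degree g \<le> m"
    unfolding g_def using degree_diff_le[of f m "smult c (p m)"] p_deg[of m] m_def
    by (simp add: degree_smult_le)
  have dgm: "degree g < m"
  proof (rule ccontr)
    assume "\<not> degree g < m"
    then have "degree g = m" using dg_le by simp
    then have "g = 0" using cg by (metis leading_coeff_0_iff)
    then show False using \<open>degree g = m\<close> m1 by simp
  qed
  have fg: "f = g + smult c (p m)" by (simp add: g_def)
  obtain m' where m': "m = Suc m'" using m1 by (cases m) auto
  define h where "h = smult (c * of_nat m) (p m')"
  have df: "d f = d g + h"
    using fg d_add d_smult p_d[of m'] by (simp add: h_def m')
  have cm0: "c * of_nat m \<noteq> 0" using c0 m1 by simp
  have h0: "lead_coeff h \<noteq> 0" using cm0 p_ne[of m'] unfolding h_def by (simp only: lead_coeff_smult) simp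
  have dh: "degree h = m - 1" using cm0 by (simp add: h_def p_deg m' del: of_nat_Suc)
  have cdg: "coeff (d g) (m - 1) = 0"
  proof (cases "degree g \<ge> 1")
    case True
    then have "degree (d g) = degree g - 1" using less(1)[of g] dgm m_def by simp
    then have "degree (d g) < m - 1" using dgm True by simp
    then show ?thesis by (simp add: coeff_eq_0)
  next
    case False
    then show ?thesis using d_deg0 by simp
  qed
  have cdf: "coeff (d f) (m - 1) \<noteq> 0" using df cdg h0 dh by simp
  have ddf: "degree (d f) \<le> m - 1"
  proof (cases "degree g \<ge> 1")
    case True
    then have "degree (d g) = degree g - 1" using less(1)[of g] dgm m_def by simp
    then show ?thesis using df dh degree_add_le[of "d g" "m-1" h] dgm by simp
  next
    case False
    then show ?thesis using d_deg0 df dh by simp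
  qed
  have "degree (d f) = m - 1" using ddf cdf le_degree by (metis le_antisym)
  moreover have "d f \<noteq> 0" using cdf by auto
  ultimately show ?case using m_def by simp
qed

lemma d_deg_le: "degree (d f) \<le> degree f - 1"
  using d_deg[of f] d_deg0[of f] by (cases "degree f \<ge> 1") auto

lemma uniq0: "d f = 0 \<Longrightarrow> poly f z = 0 \<Longrightarrow> f = 0"
proof -
  assume a: "d f = 0" "poly f z = 0"
  have "degree f = 0" using d_deg[of f] a by (cases "degree f \<ge> 1") auto
  then have "f = [:coeff f 0:]" by (rule degree_0_id[symmetric])
  moreover have "poly [:coeff f 0:] z = coeff f 0" by simp
  ultimately have "coeff f 0 = 0" using a(2) by simp
  then show ?thesis using \<open>f = [:coeff f 0:]\<close> by simp
qed

lemma dpow_diff: "(d ^^ i) (f - g) = (d ^^ i) f - (d ^^ i) g"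
  by (induction i) (auto simp: d_diff)

lemma dpow_smult: "(d ^^ i) (smult c f) = smult c ((d ^^ i) f)"
  by (induction i) (auto simp: d_smult)

lemma dpow_zero: "(d ^^ i) 0 = 0"
  by (induction i) auto

lemma gon_uniq: "degree f \<le> n \<Longrightarrow> (\<forall>i\<le>n. poly ((d ^^ i) f) (z i) = 0) \<Longrightarrow> f = 0"
proof (induction n arbitrary: f z)
  case 0
  then have "d f = 0" using d_deg0 by simp
  then show ?case using uniq0[of f "z 0"] 0 by simp
next
  case (Suc n)
  have "degree (d f) \<le> n" using d_deg_le[of f] Suc(2) by simp
  moreover have "\<forall>i\<le>n. poly ((d ^^ i) (d f)) (z (Suc i)) = 0"
    using Suc(3) by (metis Suc_le_mono funpow_Suc_right o_apply)
  ultimately have "d f = 0" using Suc(1)[of "d f" "\<lambda>i. z (Suc i)"] by simp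
  moreover have "poly f (z 0) = 0" using Suc(3) by (metis funpow_0 zero_le)
  ultimately show ?case using uniq0[of f "z 0"] by simp
qed

lemma poly_shift: "poly (shift_poly a f) x = poly f (x + a)"
  by (simp add: shift_poly_def poly_pcompose add.commute)

lemma shift_smult: "shift_poly a (smult c f) = smult c (shift_poly a f)"
  by (simp add: shift_poly_def pcompose_smult)

lemma binom: "shift_poly y (p n) =
   (\<Sum>k\<le>n. smult (of_nat (n choose k) * poly (p (n - k)) y) (p k))"
proof (induction n)
  case 0
  then show ?case by (simp add: p_0 shift_poly_def pcompose_1)
next
  case (Suc n)
  let ?R = "\<Sum>k\<le>Suc n. smult (of_nat (Suc n choose k) * poly (p (Suc n - k)) y) (p k)"
  have "d ?R = (\<Sum>k\<le>Suc n. smult (of_nat (Suc n choose k) * poly (p (Suc n - k)) y) (d (p k)))"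
    by (simp only: d_sum d_smult)
  also have "\<dots> = (\<Sum>k\<le>n. smult (of_nat (Suc n choose Suc k) * poly (p (n - k)) y) (d (p (Suc k))))"
    by (subst sum.atMost_Suc_shift) (simp add: p_0 d_one)
  also have "\<dots> = (\<Sum>k\<le>n. smult (of_nat (Suc n) * (of_nat (n choose k) * poly (p (n - k)) y)) (p k))"
  proof (rule sum.cong[OF refl])
    fix k assume "k \<in> {..n}"
    have "(of_nat (Suc n choose Suc k) :: 'a) * of_nat (Suc k) = of_nat (Suc n) * of_nat (n choose k)"
      by (metis Suc_times_binomial_eq of_nat_mult)
    then have "(of_nat (Suc n choose Suc k) * poly (p (n - k)) y) * of_nat (Suc k) = 
       of_nat (Suc n) * (of_nat (n choose k) * poly (p (n - k)) y)"
      by (metis mult.assoc mult.commute)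
    then show "smult (of_nat (Suc n choose Suc k) * poly (p (n - k)) y) (d (p (Suc k))) =
          smult (of_nat (Suc n) * (of_nat (n choose k) * poly (p (n - k)) y)) (p k)"
      by (simp only: p_d smult_smult)
  qed
  also have "\<dots> = smult (of_nat (Suc n)) (shift_poly y (p n))"
    by (simp add: Suc smult_sum2 del: of_nat_Suc) 
  finally have e1: "d ?R = smult (of_nat (Suc n)) (shift_poly y (p n))" .
  have e2: "d (shift_poly y (p (Suc n))) = smult (of_nat (Suc n)) (shift_poly y (p n))"
    by (simp add: d_shift p_d shift_smult del: of_nat_Suc)
  have e3: "poly ?R 0 = poly (p (Suc n)) y"
  proof -
    have "poly ?R 0 = (\<Sum>k\<le>Suc n. of_nat (Suc n choose k) * poly (p (Suc n - k)) y * poly (p k) 0)"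
      by (simp add: poly_sum)
    also have "\<dots> = poly (p (Suc n)) y"
      by (subst sum.atMost_Suc_shift) (simp add: p_0 p_at0)
    finally show ?thesis .
  qed
  have "shift_poly y (p (Suc n)) - ?R = 0"
  proof (rule uniq0[where z=0])
    show "d (shift_poly y (p (Suc n)) - ?R) = 0" by (simp only: d_diff e1 e2) simp
    show "poly (shift_poly y (p (Suc n)) - ?R) 0 = 0" by (simp only: poly_diff e3 poly_shift) simp
  qed
  then show ?case by simp
qed

definition e :: "nat \<Rightarrow> 'a" where "e k = coeff (p k) 1"

lemma e0: "e 0 = 0" by (simp add: e_def p_0)

lemma D1: "pderiv (p n) = (\<Sum>k\<le>n. smult (of_nat (n choose k) * e k) (p (n - k)))"
proof -
  have "poly (pderiv (p n)) x = poly (\<Sum>k\<le>n. smult (of_nat (n choose k) * e k) (p (n - k))) x" for x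
  proof -
    have "poly (pderiv (p n)) x = coeff (shift_poly x (p n)) 1"
      using coeff1_shift[of "p n" x] by (simp only: shift_poly_def)
    also have "\<dots> = (\<Sum>k\<le>n. of_nat (n choose k) * poly (p (n - k)) x * e k)"
      by (simp add: binom coeff_sum e_def)
    also have "\<dots> = poly (\<Sum>k\<le>n. smult (of_nat (n choose k) * e k) (p (n - k))) x"
      by (simp add: poly_sum mult_ac)
    finally show ?thesis .
  qed
  then show ?thesis using poly_eq_poly_eq_iff by blast
qed

definition V :: "nat \<Rightarrow> 'a poly" where
  "V n = (\<Sum>k\<le>n. smult (of_nat (n choose k) * e (Suc k)) (p (n - k)))"

lemma pderivV: "pderiv (V n) = (\<Sum>j\<le>n. smult (of_nat (n choose j) * e j) (V (n - j)))"
proof -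
  have "pderiv (V n) = (\<Sum>k\<le>n. \<Sum>j\<le>n-k. smult (of_nat (n choose k) * e (Suc k) * (of_nat (n - k choose j) * e j)) (p (n - k - j)))"
    by (simp add: V_def pderiv_sum' pderiv_smult D1 smult_sum2)
  also have "\<dots> = (\<Sum>j\<le>n. \<Sum>k\<le>n-j. smult (of_nat (n choose k) * e (Suc k) * (of_nat (n - k choose j) * e j)) (p (n - k - j)))"
    by (rule tri_swap)
  also have "\<dots> = (\<Sum>j\<le>n. \<Sum>k\<le>n-j. smult (of_nat (n choose j) * e j * (of_nat (n - j choose k) * e (Suc k))) (p (n - j - k)))"
  proof (intro sum.cong refl)
    fix j k assume "j \<in> {..n}" "k \<in> {..n-j}"
    then have "k + j \<le> n" by auto
    then have m: "(of_nat (n choose k) * of_nat (n - k choose j) :: 'a) = of_nat (n choose j) * of_nat (n - j choose k)"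
      by (metis multi_choose of_nat_mult)
    have nn: "n - k - j = n - j - k" by simp
    have "of_nat (n choose k) * e (Suc k) * (of_nat (n - k choose j) * e j) =
       (of_nat (n choose k) * of_nat (n - k choose j)) * (e (Suc k) * e j)" by (simp add: mult_ac)
    also have "\<dots> = (of_nat (n choose j) * of_nat (n - j choose k)) * (e (Suc k) * e j)" by (simp only: m)
    also have "\<dots> = of_nat (n choose j) * e j * (of_nat (n - j choose k) * e (Suc k))" by (simp add: mult_ac)
    finally show "smult (of_nat (n choose k) * e (Suc k) * (of_nat (n - k choose j) * e j)) (p (n - k - j)) =
      smult (of_nat (n choose j) * e j * (of_nat (n - j choose k) * e (Suc k))) (p (n - j - k))"
      by (simp only: nn)
  qed
  also have "\<dots> = (\<Sum>j\<le>n. smult (of_nat (n choose j) * e j) (V (n - j)))"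
    by (simp add: V_def smult_sum2)
  finally show ?thesis .
qed

lemma pV: "p (Suc n) = [:0,1:] * V n"
proof (induction n rule: less_induct)
  case (less n)
  define F where "F j = smult (of_nat (n choose j) * e j) (p (Suc n - j))" for j
  have A: "[:0,1:] * pderiv (V n) = (\<Sum>j\<le>n. F j)"
  proof -
    have "[:0,1:] * pderiv (V n) = (\<Sum>j\<le>n. smult (of_nat (n choose j) * e j) ([:0,1:] * V (n - j)))"
      by (simp add: pderivV sum_distrib_left mult_smult_right)
    also have "\<dots> = (\<Sum>j\<le>n. F j)"
    proof (rule sum.cong[OF refl])
      fix j assume "j \<in> {..n}"
      show "smult (of_nat (n choose j) * e j) ([:0,1:] * V (n - j)) = F j"
      proof (cases j)
        case 0
        then show ?thesis by (simp add: F_def e0)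
      next
        case (Suc j')
        then have "[:0,1:] * V (n - j) = p (Suc (n - j))" using less[of "n - j"] \<open>j \<in> {..n}\<close> by simp
        moreover have "Suc (n - j) = Suc n - j" using \<open>j \<in> {..n}\<close> by simp
        ultimately show ?thesis by (simp add: F_def)
      qed
    qed
    finally show ?thesis .
  qed
  have B: "pderiv (p (Suc n)) = V n + (\<Sum>j\<le>n. F (Suc j))"
  proof -
    have "pderiv (p (Suc n)) = (\<Sum>j\<le>n. smult (of_nat (Suc n choose Suc j) * e (Suc j)) (p (n - j)))"
      by (simp only: D1 sum.atMost_Suc_shift) (simp add: e0)
    also have "\<dots> = (\<Sum>j\<le>n. smult (of_nat (n choose j) * e (Suc j)) (p (n - j)) + F (Suc j))"
      by (rule sum.cong[OF refl]) (simp add: F_def algebra_simps smult_add_left)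
    also have "\<dots> = V n + (\<Sum>j\<le>n. F (Suc j))"
      by (simp add: sum.distrib V_def)
    finally show ?thesis .
  qed
  have C: "(\<Sum>j\<le>n. F (Suc j)) = (\<Sum>j\<le>n. F j)"
  proof -
    have "F 0 + (\<Sum>j\<le>n. F (Suc j)) = (\<Sum>j\<le>n. F j) + F (Suc n)"
      by (metis sum.atMost_Suc sum.atMost_Suc_shift)
    moreover have "F 0 = 0" by (simp add: F_def e0)
    moreover have "F (Suc n) = 0" by (simp add: F_def)
    ultimately show ?thesis by simp
  qed
  have "pderiv (p (Suc n)) = pderiv ([:0,1:] * V n)"
    using A B C by (simp add: pderiv_mult pderiv_pCons)
  moreover have "poly (p (Suc n)) 0 = poly ([:0,1:] * V n) 0" using p_at0[of "Suc n"] by simp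
  ultimately show ?case by (rule pderiv_uniq)
qed

lemma dV: "d (V (Suc m)) = smult (of_nat (Suc m)) (V m)"
proof -
  have "d (V (Suc m)) = (\<Sum>k\<le>Suc m. smult (of_nat (Suc m choose k) * e (Suc k)) (d (p (Suc m - k))))"
    by (simp only: V_def d_sum d_smult)
  also have "\<dots> = (\<Sum>k\<le>m. smult (of_nat (Suc m choose k) * e (Suc k)) (d (p (Suc (m - k)))))"
    by (simp add: p_0 d_one Suc_diff_le)
  also have "\<dots> = (\<Sum>k\<le>m. smult (of_nat (Suc m) * (of_nat (m choose k) * e (Suc k))) (p (m - k)))"
  proof (rule sum.cong[OF refl])
    fix k assume "k \<in> {..m}"
    have "(Suc m - k) * (Suc m choose k) = Suc m * (m choose k)"
      using binomial_absorb_comp[of "Suc m" k] by simp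
    moreover have "Suc m - k = Suc (m - k)" using \<open>k \<in> {..m}\<close> by simp
    ultimately have "(Suc m choose k) * Suc (m - k) = Suc m * (m choose k)" by (simp only: mult.commute)
    then have eq: "(of_nat (Suc m choose k) :: 'a) * of_nat (Suc (m - k)) = of_nat (Suc m) * of_nat (m choose k)"
      by (simp only: of_nat_mult[symmetric])
    have "(of_nat (Suc m choose k) * e (Suc k)) * of_nat (Suc (m - k)) = 
        ((of_nat (Suc m choose k) :: 'a) * of_nat (Suc (m - k))) * e (Suc k)" by (simp only: mult_ac)
    also have "\<dots> = (of_nat (Suc m) * of_nat (m choose k)) * e (Suc k)" by (simp only: eq)
    also have "\<dots> = of_nat (Suc m) * (of_nat (m choose k) * e (Suc k))" by (simp only: mult_ac)
    finally have "(of_nat (Suc m choose k) * e (Suc k)) * of_nat (Suc (m - k)) = of_nat (Suc m) * (of_nat (m choose k) * e (Suc k))" .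
    then show "smult (of_nat (Suc m choose k) * e (Suc k)) (d (p (Suc (m - k)))) =
         smult (of_nat (Suc m) * (of_nat (m choose k) * e (Suc k))) (p (m - k))"
      by (simp only: p_d smult_smult)
  qed
  also have "\<dots> = smult (of_nat (Suc m)) (V m)"
    by (simp only: V_def smult_sum2 smult_smult)
  finally show ?thesis .
qed

definition W :: "'a \<Rightarrow> nat \<Rightarrow> 'a poly" where
  "W b n = (case n of 0 \<Rightarrow> 1 | Suc m \<Rightarrow> [:of_nat (Suc m) * b, 1:] * V m)"

lemma lin1: "[:c, 1:] * f = [:0,1:] * f + smult c f"
  by (simp add: mult_pCons_left add.commute)

lemma Wsplit: "W b (Suc m) = p (Suc m) + smult (of_nat (Suc m) * b) (V m)"
  unfolding W_def nat.case by (subst lin1) (simp only: pV)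

lemma dW: "d (W b (Suc m)) = smult (of_nat (Suc m)) (W b m)"
proof -
  have "d (W b (Suc m)) = d (p (Suc m)) + smult (of_nat (Suc m) * b) (d (V m))"
    by (simp only: Wsplit d_add d_smult)
  also have "\<dots> = smult (of_nat (Suc m)) (W b m)"
  proof (cases m)
    case 0
    have "V 0 = [:e 1:]" by (simp add: V_def p_0)
    then show ?thesis using 0 by (simp add: d_const p_d p_0 W_def del: of_nat_Suc)
  next
    case (Suc m')
    show ?thesis
      by (simp only: Suc dV p_d Wsplit smult_add_right smult_smult) (simp add: mult_ac)
  qed
  finally show ?thesis .
qed

definition Q :: "'a \<Rightarrow> 'a \<Rightarrow> nat \<Rightarrow> 'a poly" where
  "Q b a n = shift_poly (- (a + of_nat n * b)) (W b n)"

lemma pCons_one_neq0: "[:x, 1:] \<noteq> (0 :: 'a poly)" by simp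

lemma shift_one: "shift_poly c 1 = 1" by (simp add: shift_poly_def pcompose_1)

lemma dQ: "d (Q b a (Suc m)) = smult (of_nat (Suc m)) (Q b (a + b) m)"
proof -
  have "- (a + of_nat (Suc m) * b) = - (a + b + of_nat m * b)" by (simp add: algebra_simps)
  then show ?thesis by (simp only: Q_def d_shift dW shift_smult)
qed

lemma gonQ: "poly ((d ^^ i) (Q b a n)) (a + b * of_nat i) = (if i = n then of_nat (fact n) else 0)"
proof (induction i arbitrary: a n)
  case 0
  show ?case
  proof (cases n)
    case 0
    then show ?thesis by (simp add: Q_def W_def shift_one)
  next
    case (Suc m)
    then show ?thesis by (simp add: Q_def W_def poly_shift algebra_simps)
  qed
next
  case (Suc i)
  have "(d ^^ Suc i) (Q b a n) = (d ^^ i) (d (Q b a n))" by (simp only: funpow_Suc_right o_apply)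
  show ?case
  proof (cases n)
    case 0
    have "d (Q b a n) = 0" using 0 by (simp add: Q_def W_def shift_one d_one)
    then show ?thesis using \<open>(d ^^ Suc i) (Q b a n) = _\<close> 0 by (simp add: dpow_zero)
  next
    case (Suc m)
    have pt: "a + b * of_nat (Suc i) = (a + b) + b * of_nat i" by (simp add: algebra_simps)
    have "poly ((d ^^ Suc i) (Q b a n)) (a + b * of_nat (Suc i)) =
       of_nat (Suc m) * poly ((d ^^ i) (Q b (a + b) m)) ((a + b) + b * of_nat i)"
      using \<open>(d ^^ Suc i) (Q b a n) = _\<close> Suc by (simp only: dQ dpow_smult poly_smult pt)
    also have "\<dots> = (if Suc i = n then of_nat (fact n) else 0)"
      using Suc.IH[of "a + b" m] Suc by (simp add: fact_Suc algebra_simps)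
    finally show ?thesis .
  qed
qed

lemma V_ne: "V m \<noteq> 0" using pV[of m] p_ne[of "Suc m"] by auto

lemma degV: "degree (V m) = m"
proof -
  have "Suc m = degree ([:0,1:] * V m)" using pV[of m] p_deg[of "Suc m"] by simp
  also have "\<dots> = 1 + degree (V m)" using V_ne by (subst degree_mult_eq) auto
  finally show ?thesis by simp
qed

lemma degQ: "degree (Q b a n) = n"
proof -
  have "degree (W b n) = n"
  proof (cases n)
    case 0 then show ?thesis by (simp add: W_def)
  next
    case (Suc m)
    have "degree ([:of_nat (Suc m) * b, 1:] * V m) = degree [:of_nat (Suc m) * b, 1:] + degree (V m)"
      by (rule degree_mult_eq) (auto simp: V_ne)
    then show ?thesis using Suc degV[of m] by (simp only: W_def nat.case) simp
  qed
  then show ?thesis by (simp add: Q_def shift_poly_def degree_pcompose)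
qed

end

theorem mainTheorem16:
  fixes d :: "'a::field_char_0 poly \<Rightarrow> 'a poly"
    and p t :: "nat \<Rightarrow> 'a poly"
    and a b :: 'a and n :: nat
  assumes "delta_operator d"
    and "basic_sequence d p"
    and "goncarov_basis d (\<lambda>i. a + b * of_nat i) t"
    and "n \<ge> 1"
  shows "t n = ([:- a, 1:] * pcompose (p n) [:- (a + of_nat n * b), 1:])
               div [:- (a + of_nat n * b), 1:]"
proof -
  interpret dsetup d p using assms(1,2) by unfold_locales
  have tg: "degree (t n) = n" "\<And>i. poly ((d ^^ i) (t n)) (a + b * of_nat i) = (if i = n then of_nat (fact n) else 0)"
    using assms(3) unfolding goncarov_basis_def by blast+
  have T: "t n = Q b a n"
  proof -
    have "t n - Q b a n = 0"
    proof (rule gon_uniq[where n=n and z="\<lambda>i. a + b * of_nat i"])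
      show "degree (t n - Q b a n) \<le> n"
        using degree_diff_le[of "t n" n "Q b a n"] tg(1) degQ by simp
      show "\<forall>i\<le>n. poly ((d ^^ i) (t n - Q b a n)) (a + b * of_nat i) = 0"
        by (simp add: dpow_diff tg(2) gonQ)
    qed
    then show ?thesis by simp
  qed
  obtain m where m: "n = Suc m" using assms(4) by (cases n) auto
  define c where "c = a + of_nat n * b"
  define P where "P = pcompose (V m) [:- c, 1:]"
  have c1: "pcompose [:0, 1:] [:- c, 1:] = [:- c, 1:]" by (simp add: pcompose_pCons)
  have c2: "pcompose [:of_nat n * b, 1:] [:- c, 1:] = [:- a, 1:]"
    by (simp add: pcompose_pCons c_def)
  have Wn: "W b n = [:of_nat n * b, 1:] * V m" by (simp only: W_def m nat.case)
  have "Q b a n = pcompose (W b n) [:- c, 1:]" by (simp add: Q_def shift_poly_def c_def)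
  also have "\<dots> = [:- a, 1:] * P" by (simp only: Wn pcompose_mult c2 P_def)
  finally have "Q b a n = [:- a, 1:] * P" .
  moreover have "[:- a, 1:] * pcompose (p n) [:- c, 1:] = [:- c, 1:] * ([:- a, 1:] * P)"
    by (simp only: m pV pcompose_mult c1 P_def mult_ac)
  ultimately have "([:- a, 1:] * pcompose (p n) [:- c, 1:]) div [:- c, 1:] = Q b a n"
    by (simp only: nonzero_mult_div_cancel_left[OF pCons_one_neq0]) 
  then show ?thesis using T by (simp only: c_def)
qed

end
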